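(* Let $\Omega\subset\mathbb{R}^2$ be a bounded domain with triangulation $\Omega_h$, $V_h^0$ the space of continuous piecewise affine functions on $\Omega_h$ vanishing on the boundary, $1<p<\infty$, $g>0$, $\gamma>0$, and $u_h\in V_h^0$. Define, for $v_h,w_h\in V_h^0$, $$\begin{aligned}(J'_{\gamma,h})^{\circ}(u_h)(v_h,w_h)=&\int_{\Omega_h}|\nabla u_h|^{p-2}\nabla v_h\cdot\nabla w_h\,dx+(p-2)\int_{\Omega_h}|\nabla u_h|^{p-4}(\nabla u_h\cdot\nabla v_h)(\nabla u_h\cdot\nabla w_h)\,dx\\&+\int_{A_{\gamma,h}}g\frac{\nabla v_h\cdot\nabla w_h}{|\nabla u_h|}\,dx-\int_{A_{\gamma,h}}g\frac{(\nabla u_h\cdot\nabla v_h)(\nabla u_h\cdot\nabla w_h)}{|\nabla u_h|^3}\,dx+\int_{\Omega_h\setminus A_{\gamma,h}}\gamma\,\nabla v_h\cdot\nabla w_h\,dx,\end{aligned}$$ where $A_{\gamma,h}=\{x\in\Omega_h:\gamma|\nabla u_h(x)|\ge g\}$. Then $(J'_{\gamma,h})^{\circ}(u_h)$ is positive definite, i.e. $(J'_{\gamma,h})^{\circ}(u_h)(w_h,w_h)>0$ for all $w_h\in V_h^0\setminus\{0\}$.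
   Context: $(J'_{\gamma,h})^\circ$ is the slanting function (slant derivative) of the derivative of the discrete Huber-regularized functional $J_{\gamma,h}(u_h)=\frac1p\int_{\Omega_h}|\nabla u_h|^p+\int_{\Omega_h}\psi_\gamma(\nabla u_h)-\int_{\Omega_h}fu_h$, where $\psi_\gamma(z)=g|z|-\frac{g^2}{2\gamma}$ if $|z|>g/\gamma$ and $\frac\gamma2|z|^2$ otherwise. *)

theory Defs
  imports "HOL-Analysis.Analysis"
begin

text \<open>A triangle is given by its set of three non-collinear vertices; the closed
  triangle is its convex hull.\<close>
definition is_triangle :: "(real^2) set \<Rightarrow> bool" where
  "is_triangle V \<longleftrightarrow> card V = 3 \<and> \<not> collinear V"

definition triangulation :: "(real^2) set set \<Rightarrow> (real^2) set \<Rightarrow> bool" where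
  "triangulation T \<Omega> \<longleftrightarrow>
     finite T \<and> T \<noteq> {} \<and> (\<forall>V\<in>T. is_triangle V) \<and>
     (\<forall>V1\<in>T. \<forall>V2\<in>T. V1 \<noteq> V2 \<longrightarrow>
        convex hull V1 \<inter> convex hull V2 = convex hull (V1 \<inter> V2)) \<and>
     \<Omega> = interior (\<Union>V\<in>T. convex hull V)"

text \<open>V_h^0: continuous, affine on every triangle, vanishing on the boundary
  (functions are extended by zero outside \<Omega>).\<close>
definition Vh0 :: "(real^2) set set \<Rightarrow> (real^2) set \<Rightarrow> ((real^2) \<Rightarrow> real) set" where
  "Vh0 T \<Omega> = {u. continuous_on UNIV u \<and>
     (\<forall>V\<in>T. \<exists>a b. \<forall>x\<in>convex hull V. u x = a \<bullet> x + b) \<and>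
     (\<forall>x. x \<notin> \<Omega> \<longrightarrow> u x = 0)}"

text \<open>Pointwise gradient (defined a.e., namely in the interior of every triangle).\<close>
definition grad :: "((real^2) \<Rightarrow> real) \<Rightarrow> real^2 \<Rightarrow> real^2" where
  "grad u x = (if u differentiable (at x)
               then (\<chi> i. frechet_derivative u (at x) (axis i 1)) else 0)"

definition active_set :: "real \<Rightarrow> real \<Rightarrow> (real^2) set \<Rightarrow> ((real^2) \<Rightarrow> real) \<Rightarrow> (real^2) set" where
  "active_set g \<gamma> \<Omega> u = {x \<in> \<Omega>. \<gamma> * norm (grad u x) \<ge> g}"

definition slant_J :: "real \<Rightarrow> real \<Rightarrow> real \<Rightarrow> (real^2) set \<Rightarrow>
    ((real^2) \<Rightarrow> real) \<Rightarrow> ((real^2) \<Rightarrow> real) \<Rightarrow> ((real^2) \<Rightarrow> real) \<Rightarrow> real" where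
  "slant_J p g \<gamma> \<Omega> u v w =
     (let A = active_set g \<gamma> \<Omega> u in
        integral \<Omega> (\<lambda>x. norm (grad u x) powr (p - 2) * (grad v x \<bullet> grad w x))
      + (p - 2) * integral \<Omega> (\<lambda>x. norm (grad u x) powr (p - 4)
                     * (grad u x \<bullet> grad v x) * (grad u x \<bullet> grad w x))
      + integral A (\<lambda>x. g * (grad v x \<bullet> grad w x) / norm (grad u x))
      - integral A (\<lambda>x. g * (grad u x \<bullet> grad v x) * (grad u x \<bullet> grad w x)
                          / norm (grad u x) ^ 3)
      + integral (\<Omega> - A) (\<lambda>x. \<gamma> * (grad v x \<bullet> grad w x)))"

end

theory Submission
  imports Defs
begin

lemma grad_affine:
  fixes u :: "real^2 \<Rightarrow> real"
  assumes "\<forall>y\<in>S. u y = a \<bullet> y + b" and "x \<in> interior S"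
  shows "grad u x = a"
proof -
  have d: "((\<lambda>y. a \<bullet> y + b) has_derivative (\<lambda>h. a \<bullet> h)) (at x)"
    by (auto intro!: derivative_eq_intros)
  have "(u has_derivative (\<lambda>h. a \<bullet> h)) (at x)"
    apply (rule has_derivative_transform_within_open[OF d open_interior assms(2)])
    using assms(1) interior_subset[of S] by force
  then have "u differentiable (at x)" and "frechet_derivative u (at x) = (\<lambda>h. a \<bullet> h)"
    using differentiable_def frechet_derivative_at by metis+
  then show ?thesis unfolding grad_def by (simp add: vec_eq_iff inner_axis)
qed

lemma restrict_integral:
  fixes h :: "real^2 \<Rightarrow> real"
  assumes "S \<subseteq> \<Omega>"
  shows "integral S h = integral \<Omega> (\<lambda>x. if x \<in> S then h x else 0)"
proof -
  have "integral \<Omega> (\<lambda>x. if x \<in> S then h x else 0)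
     = integral UNIV (\<lambda>x. if x \<in> \<Omega> then (if x \<in> S then h x else 0) else 0)"
    by (simp add: integral_restrict_UNIV)
  also have "\<dots> = integral UNIV (\<lambda>x. if x \<in> S then h x else 0)"
    using assms by (intro arg_cong[where f="integral UNIV"]) (auto simp: fun_eq_iff)
  also have "\<dots> = integral S h" by (simp add: integral_restrict_UNIV)
  finally show ?thesis by simp
qed

lemma pointwise:
  fixes a c :: "real^2"
  assumes p: "1 < p" and g: "0 < g" and ga: "0 < \<gamma>"
  defines "E \<equiv> norm a powr (p - 2) * (c \<bullet> c) + (p - 2) * (norm a powr (p - 4) * (a \<bullet> c) * (a \<bullet> c))
      + (if g \<le> \<gamma> * norm a then g * (c \<bullet> c) / norm a else 0)
      - (if g \<le> \<gamma> * norm a then g * (a \<bullet> c) * (a \<bullet> c) / norm a ^ 3 else 0)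
      + (if g \<le> \<gamma> * norm a then 0 else \<gamma> * (c \<bullet> c))"
  shows "0 \<le> E" and "c \<noteq> 0 \<Longrightarrow> 0 < E"
proof -
  define n where "n = norm a"
  define s where "s = a \<bullet> c"
  define q where "q = c \<bullet> c"
  have q0: "0 \<le> q" unfolding q_def by simp
  have cs: "s * s \<le> n * n * q"
  proof -
    have "\<bar>s\<bar> \<le> n * norm c" unfolding s_def n_def by (rule Cauchy_Schwarz_ineq2)
    then have "\<bar>s\<bar> * \<bar>s\<bar> \<le> (n * norm c) * (n * norm c)"
      by (intro mult_mono) auto
    moreover have "q = norm c * norm c" unfolding q_def by (simp add: dot_square_norm power2_eq_square)
    ultimately show ?thesis by (simp add: algebra_simps)
  qed
  have main: "0 \<le> E \<and> (0 < q \<longrightarrow> 0 < E)"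
  proof (cases "n = 0")
    case True
    then have "a = 0" unfolding n_def by simp
    then show ?thesis using g ga q0 unfolding E_def q_def by (simp add: mult_pos_pos)
  next
    case False
    then have n0: "0 < n" unfolding n_def by simp
    define P where "P = n powr (p - 2)"
    have P0: "0 < P" unfolding P_def using n0 by simp
    have P4: "n powr (p - 4) = P / (n * n)"
      unfolding P_def using n0 by (simp add: powr_diff powr_numeral power2_eq_square)
        (simp add: divide_simps powr_diff[symmetric] eval_nat_numeral)
    have t12: "P * (min 1 (p - 1)) * q \<le> P * q + (p - 2) * (P / (n * n) * s * s)"
    proof -
      have "min 1 (p - 1) * q \<le> q + (p - 2) * (s * s / (n * n))"
      proof (cases "p \<ge> 2")
        case True
        then show ?thesis using q0 n0 by (auto intro!: add_increasing2 mult_nonneg_nonneg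
              simp: min_def)
      next
        case False
        have "s * s / (n * n) \<le> q" using cs n0 by (simp add: divide_simps mult.commute)
        then have "(p - 2) * q \<le> (p - 2) * (s * s / (n * n))" using False
          by (intro mult_left_mono_neg) auto
        then show ?thesis using False q0 by (simp add: min_def algebra_simps)
      qed
      then have "P * (min 1 (p - 1) * q) \<le> P * (q + (p - 2) * (s * s / (n * n)))"
        using P0 by (intro mult_left_mono) auto
      then show ?thesis by (simp add: algebra_simps)
    qed
    have act: "0 \<le> g * q / n - g * s * s / n ^ 3"
    proof -
      have "g * s * s / n ^ 3 = g * (s * s) / n ^ 3" by simp
      also have "\<dots> \<le> g * (n * n * q) / n ^ 3"
        using cs g n0 by (intro divide_right_mono mult_left_mono) auto
      also have "\<dots> = g * q / n" using n0 by (simp add: power3_eq_cube divide_simps)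
      finally show ?thesis by simp
    qed
    have mp: "0 < min 1 (p - 1)" using p by simp
    have E_eq: "E = (P * q + (p - 2) * (P / (n * n) * s * s))
        + (if g \<le> \<gamma> * n then g * q / n - g * s * s / n ^ 3 else \<gamma> * q)"
      unfolding E_def P_def[symmetric] n_def[symmetric] s_def[symmetric] q_def[symmetric] P4
      by simp
    have lo: "0 \<le> (if g \<le> \<gamma> * n then g * q / n - g * s * s / n ^ 3 else \<gamma> * q)"
      using act ga q0 by simp
    have "0 \<le> P * (min 1 (p - 1)) * q" using P0 mp q0 by simp
    moreover have "0 < q \<Longrightarrow> 0 < P * (min 1 (p - 1)) * q" using P0 mp by simp
    ultimately show ?thesis using t12 lo E_eq by linarith
  qed
  then show "0 \<le> E" by simp
  assume "c \<noteq> 0"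
  then have "0 < q" unfolding q_def by simp
  then show "0 < E" using main by simp
qed

lemma tri_inter_negligible:
  assumes tri: "triangulation T \<Omega>" and V1: "V1 \<in> T" and V2: "V2 \<in> T" and ne: "V1 \<noteq> V2"
  shows "negligible (convex hull V1 \<inter> convex hull V2)"
proof -
  have eq: "convex hull V1 \<inter> convex hull V2 = convex hull (V1 \<inter> V2)"
    using tri V1 V2 ne unfolding triangulation_def by blast
  have c1: "card V1 = 3" and c2: "card V2 = 3"
    using tri V1 V2 unfolding triangulation_def is_triangle_def by auto
  then have f1: "finite V1" and f2: "finite V2" by (auto intro: card_ge_0_finite)
  have "V1 \<inter> V2 \<noteq> V1"
  proof
    assume "V1 \<inter> V2 = V1"
    then have "V1 \<subseteq> V2" by blast
    then have "V1 = V2" using c1 c2 f2 by (simp add: card_subset_eq)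
    then show False using ne by simp
  qed
  then have "V1 \<inter> V2 \<subset> V1" by blast
  then have "card (V1 \<inter> V2) < 3" using c1 f1 by (metis psubset_card_mono)
  then have "interior (convex hull (V1 \<inter> V2)) = {}"
    using f1 by (intro empty_interior_convex_hull) auto
  moreover have "closed (convex hull (V1 \<inter> V2))"
    using f1 by (simp add: compact_imp_closed finite_imp_compact_convex_hull)
  ultimately have "frontier (convex hull (V1 \<inter> V2)) = convex hull (V1 \<inter> V2)"
    by (simp add: frontier_def closure_closed)
  then show ?thesis
    using negligible_convex_frontier[OF convex_convex_hull, of "V1 \<inter> V2"] eq by simp
qed

lemma tri_measure_pos:
  assumes tri: "triangulation T \<Omega>" and V: "V \<in> T"
  shows "0 < measure lebesgue (convex hull V)"
proof -
  have c: "card V = 3" and nc: "\<not> collinear V"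
    using tri V unfolding triangulation_def is_triangle_def by auto
  then obtain x y z where V_eq: "V = {x, y, z}" and d: "x \<noteq> y" "x \<noteq> z" "y \<noteq> z"
    by (auto simp: card_3_iff)
  have "\<not> affine_dependent V" using nc V_eq collinear_3_eq_affine_dependent by metis
  moreover have "card V = Suc DIM(real^2)" using c by simp
  ultimately have "interior (convex hull V) \<noteq> {}"
    using interior_convex_hull_eq_empty by blast
  then obtain e r where r: "0 < r" "ball e r \<subseteq> interior (convex hull V)"
    by (meson all_not_in_conv open_contains_ball open_interior)
  have fin: "finite V" using c by (auto intro: card_ge_0_finite)
  have lm: "convex hull V \<in> lmeasurable"
    using fin by (simp add: lmeasurable_compact finite_imp_compact_convex_hull)
  show ?thesis
  proof (rule ccontr)
    assume "\<not> ?thesis"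
    then have "measure lebesgue (convex hull V) = 0" using measure_nonneg[of lebesgue] by (meson antisym not_le)
    then have "negligible (convex hull V)" using lm negligible_iff_measure by blast
    moreover have "ball e r \<subseteq> convex hull V" using r interior_subset by blast
    ultimately have "negligible (ball e r)" using negligible_subset by blast
    then show False using open_not_negligible[of "ball e r"] r by auto
  qed
qed

lemma key_integral:
  fixes f :: "real^2 \<Rightarrow> real"
  assumes tri: "triangulation T \<Omega>"
    and c: "\<And>V x. V \<in> T \<Longrightarrow> x \<in> interior (convex hull V) \<Longrightarrow> f x = c V"
  shows "(f has_integral (\<Sum>V\<in>T. c V * measure lebesgue (convex hull V))) \<Omega>"
proof -
  have fin: "finite T" using tri unfolding triangulation_def by blast
  have finV: "finite V" if "V \<in> T" for V
  proof -
    have "\<forall>V\<in>T. is_triangle V" using tri unfolding triangulation_def by (elim conjE)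
    then have "is_triangle V" using that by (rule bspec)
    then have "card V = 3" unfolding is_triangle_def by blast
    then show ?thesis by (intro card_ge_0_finite) simp
  qed
  have each: "(f has_integral (c V * measure lebesgue (convex hull V))) (convex hull V)"
    if V: "V \<in> T" for V
  proof -
    have lm: "convex hull V \<in> lmeasurable"
      using finV[OF V] by (simp add: lmeasurable_compact finite_imp_compact_convex_hull)
    then have "(\<lambda>x. 1::real) integrable_on convex hull V" using lmeasurable_iff_integrable_on by blast
    then have "((\<lambda>x. 1::real) has_integral integral (convex hull V) (\<lambda>x. 1)) (convex hull V)"
      by (rule integrable_integral)
    then have one: "((\<lambda>x. 1::real) has_integral measure lebesgue (convex hull V)) (convex hull V)"
      using lmeasure_integral[OF lm] by simp
    have h: "((\<lambda>x. c V) has_integral (c V * measure lebesgue (convex hull V))) (convex hull V)"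
      using has_integral_mult_right[OF one, of "c V"] by simp
    show ?thesis
    proof (rule has_integral_spike[OF negligible_convex_frontier[OF convex_convex_hull[of V]] _ h])
      fix x assume "x \<in> convex hull V - frontier (convex hull V)"
      then have "x \<in> interior (convex hull V)"
        by (simp add: frontier_def closure_closed compact_imp_closed finite_imp_compact_convex_hull finV[OF V])
      then show "f x = c V" using c V by blast
    qed
  qed
  have U: "(f has_integral (\<Sum>V\<in>T. c V * measure lebesgue (convex hull V))) (\<Union>V\<in>T. convex hull V)"
  proof (rule has_integral_UN[OF fin each])
    show "pairwise (\<lambda>i i'. negligible (convex hull i \<inter> convex hull i')) T"
      unfolding pairwise_def using tri_inter_negligible[OF tri] by blast
  qed assumption
  have Om: "\<Omega> = interior (\<Union>V\<in>T. convex hull V)" using tri unfolding triangulation_def by blast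
  have sub: "(\<Union>V\<in>T. convex hull V) - \<Omega> \<subseteq> (\<Union>V\<in>T. frontier (convex hull V))"
  proof
    fix x assume x: "x \<in> (\<Union>V\<in>T. convex hull V) - \<Omega>"
    then obtain V where V: "V \<in> T" "x \<in> convex hull V" by blast
    have "interior (convex hull V) \<subseteq> \<Omega>" unfolding Om using V by (intro interior_mono) blast
    then have "x \<notin> interior (convex hull V)" using x by blast
    then have "x \<in> frontier (convex hull V)"
      using V by (simp add: frontier_def closure_closed compact_imp_closed finite_imp_compact_convex_hull finV)
    then show "x \<in> (\<Union>V\<in>T. frontier (convex hull V))" using V by blast
  qed
  have neg: "negligible (\<Union>V\<in>T. frontier (convex hull V))"
    using fin by (intro negligible_Union) (auto intro: negligible_convex_frontier)
  show ?thesis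
  proof (subst has_integral_spike_set_eq[where T="\<Union>V\<in>T. convex hull V"])
    show "negligible {x \<in> \<Omega> - (\<Union>V\<in>T. convex hull V). f x \<noteq> 0}"
    proof -
      have "\<Omega> \<subseteq> (\<Union>V\<in>T. convex hull V)" using Om interior_subset by blast
      then have "{x \<in> \<Omega> - (\<Union>V\<in>T. convex hull V). f x \<noteq> 0} = {}" by blast
      then show ?thesis by (metis negligible_empty)
    qed
    show "negligible {x \<in> (\<Union>V\<in>T. convex hull V) - \<Omega>. f x \<noteq> 0}"
      by (rule negligible_subset[OF neg]) (use sub in blast)
  qed (rule U)
qed

lemma affine_coeffs:
  assumes "u \<in> Vh0 T \<Omega>"
  obtains a b where "\<And>V x. V \<in> T \<Longrightarrow> x \<in> convex hull V \<Longrightarrow> u x = a V \<bullet> x + b V"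
proof -
  have "\<forall>V\<in>T. \<exists>ab. \<forall>x\<in>convex hull V. u x = fst ab \<bullet> x + snd ab"
    using assms unfolding Vh0_def by fastforce
  then obtain f where "\<forall>V\<in>T. \<forall>x\<in>convex hull V. u x = fst (f V) \<bullet> x + snd (f V)"
    by metis
  then show ?thesis using that[of "\<lambda>V. fst (f V)" "\<lambda>V. snd (f V)"] by blast
qed

theorem proposition7:
  fixes T :: "(real^2) set set" and \<Omega> :: "(real^2) set"
    and p g \<gamma> :: real and u :: "(real^2) \<Rightarrow> real"
  assumes "triangulation T \<Omega>" and "connected \<Omega>" and "bounded \<Omega>"
    and "1 < p" and "0 < g" and "0 < \<gamma>"
    and "u \<in> Vh0 T \<Omega>"
  shows "\<forall>w \<in> Vh0 T \<Omega>. w \<noteq> (\<lambda>x. 0) \<longrightarrow> slant_J p g \<gamma> \<Omega> u w w > 0"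
proof (intro ballI impI)
  fix w assume w: "w \<in> Vh0 T \<Omega>" and wne: "w \<noteq> (\<lambda>x. 0)"
  note tri = assms(1)
  have fin: "finite T" using tri unfolding triangulation_def by blast
  obtain au bu where au: "\<And>V x. V \<in> T \<Longrightarrow> x \<in> convex hull V \<Longrightarrow> u x = au V \<bullet> x + bu V"
    using affine_coeffs[OF assms(7)] by blast
  obtain aw bw where aw: "\<And>V x. V \<in> T \<Longrightarrow> x \<in> convex hull V \<Longrightarrow> w x = aw V \<bullet> x + bw V"
    using affine_coeffs[OF w] by blast
  have Om: "\<Omega> = interior (\<Union>V\<in>T. convex hull V)" using tri unfolding triangulation_def by blast
  have intO: "interior (convex hull V) \<subseteq> \<Omega>" if "V \<in> T" for V
    unfolding Om using that by (intro interior_mono) blast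
  have gu: "grad u x = au V" if "V \<in> T" "x \<in> interior (convex hull V)" for V x
    using grad_affine[of "convex hull V" u "au V" "bu V" x] au that by blast
  have gw: "grad w x = aw V" if "V \<in> T" "x \<in> interior (convex hull V)" for V x
    using grad_affine[of "convex hull V" w "aw V" "bw V" x] aw that by blast
  define A where "A = active_set g \<gamma> \<Omega> u"
  have AO: "A \<subseteq> \<Omega>" unfolding A_def active_set_def by auto
  have inA: "x \<in> A \<longleftrightarrow> g \<le> \<gamma> * norm (au V)" if "V \<in> T" "x \<in> interior (convex hull V)" for V x
    using that intO gu unfolding A_def active_set_def by auto
  define m where "m V = measure lebesgue (convex hull (V::(real^2) set))" for V
  define c1 where "c1 V = norm (au V) powr (p - 2) * (aw V \<bullet> aw V)" for V
  define c2 where "c2 V = norm (au V) powr (p - 4) * (au V \<bullet> aw V) * (au V \<bullet> aw V)" for V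
  define c3 where "c3 V = (if g \<le> \<gamma> * norm (au V) then g * (aw V \<bullet> aw V) / norm (au V) else 0)" for V
  define c4 where "c4 V = (if g \<le> \<gamma> * norm (au V) then g * (au V \<bullet> aw V) * (au V \<bullet> aw V) / norm (au V) ^ 3 else 0)" for V
  define c5 where "c5 V = (if g \<le> \<gamma> * norm (au V) then 0 else \<gamma> * (aw V \<bullet> aw V))" for V
  have I1: "integral \<Omega> (\<lambda>x. norm (grad u x) powr (p - 2) * (grad w x \<bullet> grad w x)) = (\<Sum>V\<in>T. c1 V * m V)"
    unfolding m_def
  proof (rule integral_unique, rule key_integral[OF tri])
    fix V x assume V: "V \<in> T" and x: "x \<in> interior (convex hull V)"
    show "norm (grad u x) powr (p - 2) * (grad w x \<bullet> grad w x) = c1 V"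
      unfolding gu[OF V x] gw[OF V x] c1_def ..
  qed
  have I2: "integral \<Omega> (\<lambda>x. norm (grad u x) powr (p - 4) * (grad u x \<bullet> grad w x) * (grad u x \<bullet> grad w x)) = (\<Sum>V\<in>T. c2 V * m V)"
    unfolding m_def
  proof (rule integral_unique, rule key_integral[OF tri])
    fix V x assume V: "V \<in> T" and x: "x \<in> interior (convex hull V)"
    show "norm (grad u x) powr (p - 4) * (grad u x \<bullet> grad w x) * (grad u x \<bullet> grad w x) = c2 V"
      unfolding gu[OF V x] gw[OF V x] c2_def ..
  qed
  have I3: "integral A (\<lambda>x. g * (grad w x \<bullet> grad w x) / norm (grad u x)) = (\<Sum>V\<in>T. c3 V * m V)"
    unfolding m_def restrict_integral[OF AO]
  proof (rule integral_unique, rule key_integral[OF tri])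
    fix V x assume V: "V \<in> T" and x: "x \<in> interior (convex hull V)"
    show "(if x \<in> A then g * (grad w x \<bullet> grad w x) / norm (grad u x) else 0) = c3 V"
      unfolding gu[OF V x] gw[OF V x] c3_def inA[OF V x] ..
  qed
  have I4: "integral A (\<lambda>x. g * (grad u x \<bullet> grad w x) * (grad u x \<bullet> grad w x) / norm (grad u x) ^ 3) = (\<Sum>V\<in>T. c4 V * m V)"
    unfolding m_def restrict_integral[OF AO]
  proof (rule integral_unique, rule key_integral[OF tri])
    fix V x assume V: "V \<in> T" and x: "x \<in> interior (convex hull V)"
    show "(if x \<in> A then g * (grad u x \<bullet> grad w x) * (grad u x \<bullet> grad w x) / norm (grad u x) ^ 3 else 0) = c4 V"
      unfolding gu[OF V x] gw[OF V x] c4_def inA[OF V x] ..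
  qed
  have I5: "integral (\<Omega> - A) (\<lambda>x. \<gamma> * (grad w x \<bullet> grad w x)) = (\<Sum>V\<in>T. c5 V * m V)"
    unfolding m_def restrict_integral[of "\<Omega> - A" \<Omega>, OF Diff_subset]
  proof (rule integral_unique, rule key_integral[OF tri])
    fix V x assume V: "V \<in> T" and x: "x \<in> interior (convex hull V)"
    have "x \<in> \<Omega>" using intO[OF V] x by blast
    then show "(if x \<in> \<Omega> - A then \<gamma> * (grad w x \<bullet> grad w x) else 0) = c5 V"
      using inA[OF V x] gu[OF V x] gw[OF V x] by (simp add: c5_def)
  qed
  define E where "E V = c1 V + (p - 2) * c2 V + c3 V - c4 V + c5 V" for V
  have sJ: "slant_J p g \<gamma> \<Omega> u w w = (\<Sum>V\<in>T. E V * m V)"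
  proof -
    have "\<And>V. E V * m V = c1 V * m V + (p - 2) * (c2 V * m V) + c3 V * m V - c4 V * m V + c5 V * m V"
      unfolding E_def by (simp only: ring_distribs mult.assoc)
    then have "(\<Sum>V\<in>T. E V * m V) = (\<Sum>V\<in>T. c1 V * m V) + (p - 2) * (\<Sum>V\<in>T. c2 V * m V)
       + (\<Sum>V\<in>T. c3 V * m V) - (\<Sum>V\<in>T. c4 V * m V) + (\<Sum>V\<in>T. c5 V * m V)"
      by (simp only: sum.distrib sum_subtractf sum_distrib_left)
    then show ?thesis
      unfolding slant_J_def Let_def A_def[symmetric] I1 I2 I3 I4 I5 by simp
  qed
  have Enn: "0 \<le> E V" for V
    unfolding E_def c1_def c2_def c3_def c4_def c5_def
    by (rule pointwise(1)[OF assms(4,5,6), where a="au V" and c="aw V"])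
  have Epos: "aw V \<noteq> 0 \<Longrightarrow> 0 < E V" for V
    unfolding E_def c1_def c2_def c3_def c4_def c5_def
    by (rule pointwise(2)[OF assms(4,5,6), where a="au V" and c="aw V"])
  have "\<exists>V\<in>T. aw V \<noteq> 0"
  proof (rule ccontr)
    assume "\<not> ?thesis"
    then have z: "\<And>V. V \<in> T \<Longrightarrow> aw V = 0" by blast
    have wO: "\<And>x. x \<notin> \<Omega> \<Longrightarrow> w x = 0" and wc: "continuous_on UNIV w"
      using w unfolding Vh0_def by auto
    have "w ` UNIV \<subseteq> insert 0 (bw ` T)"
    proof
      fix y assume "y \<in> w ` UNIV"
      then obtain x where y: "y = w x" by blast
      show "y \<in> insert 0 (bw ` T)"
      proof (cases "x \<in> \<Omega>")
        case True
        then obtain V where "V \<in> T" "x \<in> convex hull V" using Om interior_subset by blast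
        then show ?thesis using aw[of V x] z y by simp
      next
        case False then show ?thesis using wO y by simp
      qed
    qed
    then have "finite (w ` UNIV)" using fin by (meson finite_imageI finite_insert finite_subset)
    then have "w constant_on UNIV"
      using continuous_finite_range_constant[OF connected_UNIV wc] by blast
    moreover obtain x0 where "x0 \<notin> \<Omega>" using assms(3) not_bounded_UNIV by (metis UNIV_eq_I)
    ultimately obtain k where k: "\<And>x. w x = k" and "x0 \<notin> \<Omega>" unfolding constant_on_def by blast
    then have "k = 0" using wO by metis
    then have "w = (\<lambda>x. 0)" using k by (simp add: fun_eq_iff)
    then show False using wne by simp
  qed
  then obtain V0 where V0: "V0 \<in> T" "aw V0 \<noteq> 0" by blast
  have "0 < (\<Sum>V\<in>T. E V * m V)"
  proof (rule sum_pos2[OF fin V0(1)])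
    have "0 < m V0" unfolding m_def by (rule tri_measure_pos[OF tri V0(1)])
    then show "0 < E V0 * m V0" using Epos[OF V0(2)] by (rule mult_pos_pos[rotated])
    have mnn: "0 \<le> m V" for V unfolding m_def by (rule measure_nonneg)
    show "\<And>V. V \<in> T \<Longrightarrow> 0 \<le> E V * m V" using Enn mnn by (rule mult_nonneg_nonneg)
  qed
  then show "0 < slant_J p g \<gamma> \<Omega> u w w" using sJ by simp
qed

end
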